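(* Let $n\neq 1$ be a real number, $k_n=n-1$, $m_n=\tfrac12(3n-1)$, and $k_0,k_1,k_2\in\mathbb{R}$. On the phase space with canonical coordinates $(r,\phi,p_r,p_\phi)$, $r>0$, consider $$H_{nd}=\tfrac12 r^{2n}\Big(p_r^2+\tfrac{p_\phi^2}{r^2}\Big)+k_0r^{k_n}+r^{k_n/2}\Big(k_1\cos\big(\tfrac{k_n}{2}\phi\big)+k_2\sin\big(\tfrac{k_n}{2}\phi\big)\Big).$$ Define the real functions $$A_{n1}=r^{n-1}p_\phi^2+k_0,\qquad A_{n2}=\frac{1}{r^{k_n/2}}\Big(r^{m_n}p_rp_\phi+k_1\sin\big(\tfrac{k_n}{2}\phi\big)-k_2\cos\big(\tfrac{k_n}{2}\phi\big)\Big),$$ and the complex functions $A_n=A_{n1}+iA_{n2}$ and $N_\phi=\cos(k_n\phi)+i\sin(k_n\phi)$. Then the complex function $J_{23}=A_nN_\phi$, which is quadratic in the momenta, is a constant of motion of $H_{nd}$: $\{J_{23},H_{nd}\}=0$; equivalently $\mathrm{Re}(J_{23})$ and $\mathrm{Im}(J_{23})$ both Poisson commute with $H_{nd}$.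
   Context: The Poisson bracket is the canonical one in $(r,\phi,p_r,p_\phi)$, extended complex-linearly to complex-valued functions. A constant of motion of $H$ is a function $F$ with $\{F,H\}=0$. *)

theory Defs
  imports "HOL-Analysis.Analysis"
begin

type_synonym phase = "real \<times> real \<times> real \<times> real"

definition pd_r :: "(phase \<Rightarrow> complex) \<Rightarrow> phase \<Rightarrow> complex" where
  "pd_r F z = (case z of (r, ph, pr, pph) \<Rightarrow> vector_derivative (\<lambda>t. F (t, ph, pr, pph)) (at r))"

definition pd_phi :: "(phase \<Rightarrow> complex) \<Rightarrow> phase \<Rightarrow> complex" where
  "pd_phi F z = (case z of (r, ph, pr, pph) \<Rightarrow> vector_derivative (\<lambda>t. F (r, t, pr, pph)) (at ph))"

definition pd_pr :: "(phase \<Rightarrow> complex) \<Rightarrow> phase \<Rightarrow> complex" where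
  "pd_pr F z = (case z of (r, ph, pr, pph) \<Rightarrow> vector_derivative (\<lambda>t. F (r, ph, t, pph)) (at pr))"

definition pd_pphi :: "(phase \<Rightarrow> complex) \<Rightarrow> phase \<Rightarrow> complex" where
  "pd_pphi F z = (case z of (r, ph, pr, pph) \<Rightarrow> vector_derivative (\<lambda>t. F (r, ph, pr, t)) (at pph))"

definition poisson :: "(phase \<Rightarrow> complex) \<Rightarrow> (phase \<Rightarrow> complex) \<Rightarrow> phase \<Rightarrow> complex" where
  "poisson F G z = pd_r F z * pd_pr G z - pd_pr F z * pd_r G z
                 + pd_phi F z * pd_pphi G z - pd_pphi F z * pd_phi G z"

definition k_n :: "real \<Rightarrow> real" where "k_n n = n - 1"
definition m_n :: "real \<Rightarrow> real" where "m_n n = (3 * n - 1) / 2"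

definition H_nd :: "real \<Rightarrow> real \<Rightarrow> real \<Rightarrow> real \<Rightarrow> phase \<Rightarrow> real" where
  "H_nd n k0 k1 k2 z = (case z of (r, ph, pr, pph) \<Rightarrow>
     1/2 * r powr (2 * n) * (pr^2 + pph^2 / r^2) + k0 * r powr (k_n n)
     + r powr (k_n n / 2) * (k1 * cos (k_n n / 2 * ph) + k2 * sin (k_n n / 2 * ph)))"

definition A_n1 :: "real \<Rightarrow> real \<Rightarrow> phase \<Rightarrow> real" where
  "A_n1 n k0 z = (case z of (r, ph, pr, pph) \<Rightarrow> r powr (n - 1) * pph^2 + k0)"

definition A_n2 :: "real \<Rightarrow> real \<Rightarrow> real \<Rightarrow> phase \<Rightarrow> real" where
  "A_n2 n k1 k2 z = (case z of (r, ph, pr, pph) \<Rightarrow>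
     1 / r powr (k_n n / 2) * (r powr (m_n n) * pr * pph + k1 * sin (k_n n / 2 * ph) - k2 * cos (k_n n / 2 * ph)))"

definition A_n :: "real \<Rightarrow> real \<Rightarrow> real \<Rightarrow> real \<Rightarrow> phase \<Rightarrow> complex" where
  "A_n n k0 k1 k2 z = complex_of_real (A_n1 n k0 z) + \<i> * complex_of_real (A_n2 n k1 k2 z)"

definition N_phi :: "real \<Rightarrow> phase \<Rightarrow> complex" where
  "N_phi n z = (case z of (r, ph, pr, pph) \<Rightarrow>
     complex_of_real (cos (k_n n * ph)) + \<i> * complex_of_real (sin (k_n n * ph)))"

definition J_23 :: "real \<Rightarrow> real \<Rightarrow> real \<Rightarrow> real \<Rightarrow> phase \<Rightarrow> complex" where
  "J_23 n k0 k1 k2 z = A_n n k0 k1 k2 z * N_phi n z"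

end

theory Submission
  imports Defs
begin

lemma powr_L:
  fixes r n :: real assumes r: "0 < r"
  shows L1: "r powr (2 * n) = (r powr ((n-1)/2))^4 * r^2"
    and L2: "r powr (2 * n - 1) = (r powr ((n-1)/2))^4 * r"
    and L3: "r powr (n-1) = (r powr ((n-1)/2))^2"
    and L4: "r powr (n-2) = (r powr ((n-1)/2))^2 / r"
    and L5: "r powr ((n-1)/2 - 1) = r powr ((n-1)/2) / r"
    and L6: "r powr ((3 * n-1)/2) = (r powr ((n-1)/2))^3 * r"
    and L7: "r powr ((3 * n-1)/2 - 1) = (r powr ((n-1)/2))^3"
    and L8: "r powr (n - 1 - 1) = (r powr ((n-1)/2))^2 / r"
proof -
  have p: "\<And>x k. (r powr x) ^ k = r powr (real k * x)"
    using r by (simp add: powr_realpow[symmetric] powr_powr mult.commute)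
  have m: "\<And>x. r powr x * r = r powr (x + 1)" using r by (simp add: powr_add)
  have dv: "\<And>x. r powr x / r = r powr (x - 1)" using r by (simp add: powr_diff)
  have m2: "\<And>x. r powr x * r^2 = r powr (x + 2)" using r
    by (simp add: powr_add power2_eq_square powr_realpow[symmetric])
  have c: "\<And>x y. x = y \<Longrightarrow> r powr x = r powr y" by simp
  show "r powr (2 * n) = (r powr ((n-1)/2))^4 * r^2"
    unfolding p m2 by (rule c) (simp add: field_simps)
  show "r powr (2 * n - 1) = (r powr ((n-1)/2))^4 * r"
    unfolding p m by (rule c) (simp add: field_simps)
  show "r powr (n-1) = (r powr ((n-1)/2))^2"
    unfolding p by (rule c) (simp add: field_simps)
  show "r powr (n-2) = (r powr ((n-1)/2))^2 / r"
    unfolding p dv by (rule c) (simp add: field_simps)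
  show "r powr ((n-1)/2 - 1) = r powr ((n-1)/2) / r"
    unfolding dv by (rule c) (simp add: field_simps)
  show "r powr ((3 * n-1)/2) = (r powr ((n-1)/2))^3 * r"
    unfolding p m by (rule c) (simp add: field_simps)
  show "r powr ((3 * n-1)/2 - 1) = (r powr ((n-1)/2))^3"
    unfolding p by (rule c) (simp add: field_simps)
  show "r powr (n - 1 - 1) = (r powr ((n-1)/2))^2 / r"
    unfolding p dv by (rule c) (simp add: field_simps)
qed

lemma vd_real:
  "(g has_real_derivative D) (at x) \<Longrightarrow>
   vector_derivative (\<lambda>t. complex_of_real (g t)) (at x) = complex_of_real D"
  by (rule vector_derivative_at, rule has_vector_derivative_of_real)

lemma vd_cplx:
  assumes "((\<lambda>t. Re (f t)) has_real_derivative a) (at x)"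
      and "((\<lambda>t. Im (f t)) has_real_derivative b) (at x)"
  shows "vector_derivative f (at x) = Complex a b"
  by (rule vector_derivative_at) (simp add: has_vector_derivative_complex_iff assms)

lemma ReJ: "Re (J_23 n k0 k1 k2 (r, ph, pr, pph)) =
   (r powr (n - 1) * pph^2 + k0) * cos ((n - 1) * ph)
   - (1 / r powr ((n - 1) / 2) * (r powr ((3 * n - 1) / 2) * pr * pph + k1 * sin ((n - 1) / 2 * ph) - k2 * cos ((n - 1) / 2 * ph))) * sin ((n - 1) * ph)"
  by (simp add: J_23_def A_n_def N_phi_def A_n1_def A_n2_def k_n_def m_n_def)

lemma ImJ: "Im (J_23 n k0 k1 k2 (r, ph, pr, pph)) =
   (r powr (n - 1) * pph^2 + k0) * sin ((n - 1) * ph)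
   + (1 / r powr ((n - 1) / 2) * (r powr ((3 * n - 1) / 2) * pr * pph + k1 * sin ((n - 1) / 2 * ph) - k2 * cos ((n - 1) / 2 * ph))) * cos ((n - 1) * ph)"
  by (simp add: J_23_def A_n_def N_phi_def A_n1_def A_n2_def k_n_def m_n_def)

lemma Hform: "H_nd n k0 k1 k2 (r, ph, pr, pph) =
     1/2 * r powr (2 * n) * (pr^2 + pph^2 / r^2) + k0 * r powr (n - 1)
     + r powr ((n - 1) / 2) * (k1 * cos ((n - 1) / 2 * ph) + k2 * sin ((n - 1) / 2 * ph))"
  by (simp add: H_nd_def k_n_def)

theorem proposition2:
  fixes n k0 k1 k2 r ph pr pph :: real
  assumes "n \<noteq> 1" and "r > 0"
  shows "poisson (J_23 n k0 k1 k2) (\<lambda>z. complex_of_real (H_nd n k0 k1 k2 z)) (r, ph, pr, pph) = 0"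
proof -
  note r = \<open>r > 0\<close>
  define e where "e = r powr ((n - 1) / 2)"
  have r0: "r \<noteq> 0" using r by simp
  have e: "e > 0" using r by (simp add: e_def)
  define C where "C = cos ((n - 1) / 2 * ph)"
  define S where "S = sin ((n - 1) / 2 * ph)"
  define c where "c = cos ((n - 1) * ph)"
  define s where "s = sin ((n - 1) * ph)"
  define A1 where "A1 = e^2 * pph^2 + k0"
  define A2 where "A2 = e^2 * r * pr * pph + (k1 * S - k2 * C) / e"
  define Hr where "Hr = n * e^4 * r * pr^2 + (n - 1) * e^4 / r * pph^2 + k0 * (n - 1) * e^2 / r
       + (n - 1) / 2 * e / r * (k1 * C + k2 * S)"
  define Hph where "Hph = e * (n - 1) / 2 * (k2 * C - k1 * S)"
  define Hpr where "Hpr = e^4 * r^2 * pr"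
  define Hpp where "Hpp = e^4 * pph"
  define A1r where "A1r = (n - 1) * e^2 / r * pph^2"
  define A1pp where "A1pp = 2 * e^2 * pph"
  define A2r where "A2r = n * e^2 * pr * pph - (n - 1) / 2 * (k1 * S - k2 * C) / (e * r)"
  define A2ph where "A2ph = (n - 1) / 2 * (k1 * C + k2 * S) / e"
  define A2pr where "A2pr = e^2 * r * pph"
  define A2pp where "A2pp = e^2 * r * pr"
  note defs = C_def S_def c_def s_def A1_def A2_def Hr_def Hph_def Hpr_def Hpp_def
    A1r_def A1pp_def A2r_def A2ph_def A2pr_def A2pp_def
  note Ls = L1[OF r, of n] L2[OF r, of n] L3[OF r, of n] L4[OF r, of n] L5[OF r, of n] L6[OF r, of n] L7[OF r, of n] L8[OF r, of n]

  have dHr: "((\<lambda>t. H_nd n k0 k1 k2 (t, ph, pr, pph)) has_real_derivative Hr) (at r)"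
    unfolding Hform
    apply (rule derivative_eq_intros refl | rule r | (simp add: r r0; fail))+
    using r e unfolding defs apply ((simp only: Ls)?) apply (fold e_def) apply (simp add: field_simps) apply (simp_all add: algebra_simps power2_eq_square power3_eq_cube power4_eq_xxxx eval_nat_numeral)? done
  have dHph: "((\<lambda>t. H_nd n k0 k1 k2 (r, t, pr, pph)) has_real_derivative Hph) (at ph)"
    unfolding Hform
    apply (rule derivative_eq_intros refl | rule r | (simp add: r r0; fail))+
    using r e unfolding defs apply ((simp only: Ls)?) apply (fold e_def) apply (simp add: field_simps) apply (simp_all add: algebra_simps power2_eq_square power3_eq_cube power4_eq_xxxx eval_nat_numeral)? done
  have dHpr: "((\<lambda>t. H_nd n k0 k1 k2 (r, ph, t, pph)) has_real_derivative Hpr) (at pr)"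
    unfolding Hform
    apply (rule derivative_eq_intros refl | rule r | (simp add: r r0; fail))+
    using r e unfolding defs apply ((simp only: Ls)?) apply (fold e_def) apply (simp add: field_simps) apply (simp_all add: algebra_simps power2_eq_square power3_eq_cube power4_eq_xxxx eval_nat_numeral)? done
  have dHpp: "((\<lambda>t. H_nd n k0 k1 k2 (r, ph, pr, t)) has_real_derivative Hpp) (at pph)"
    unfolding Hform
    apply (rule derivative_eq_intros refl | rule r | (simp add: r r0; fail))+
    using r e unfolding defs apply ((simp only: Ls)?) apply (fold e_def) apply (simp add: field_simps) apply (simp_all add: algebra_simps power2_eq_square power3_eq_cube power4_eq_xxxx eval_nat_numeral)? done
  have dRJr: "((\<lambda>t. Re (J_23 n k0 k1 k2 (t, ph, pr, pph))) has_real_derivative (A1r * c - A2r * s)) (at r)"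
    unfolding ReJ
    apply (rule derivative_eq_intros refl | rule r | (simp add: r r0; fail))+
    using r e unfolding defs apply ((simp only: Ls)?) apply (fold e_def) apply (simp add: field_simps) apply (simp_all add: algebra_simps power2_eq_square power3_eq_cube power4_eq_xxxx eval_nat_numeral)? done
  have dIJr: "((\<lambda>t. Im (J_23 n k0 k1 k2 (t, ph, pr, pph))) has_real_derivative (A1r * s + A2r * c)) (at r)"
    unfolding ImJ
    apply (rule derivative_eq_intros refl | rule r | (simp add: r r0; fail))+
    using r e unfolding defs apply ((simp only: Ls)?) apply (fold e_def) apply (simp add: field_simps) apply (simp_all add: algebra_simps power2_eq_square power3_eq_cube power4_eq_xxxx eval_nat_numeral)? done
  have dRJph: "((\<lambda>t. Re (J_23 n k0 k1 k2 (r, t, pr, pph))) has_real_derivative (-(n-1) * A1 * s - A2ph * s - (n-1) * A2 * c)) (at ph)"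
    unfolding ReJ
    apply (rule derivative_eq_intros refl | rule r | (simp add: r r0; fail))+
    using r e unfolding defs apply ((simp only: Ls)?) apply (fold e_def) apply (simp add: field_simps) apply (simp_all add: algebra_simps power2_eq_square power3_eq_cube power4_eq_xxxx eval_nat_numeral)? done
  have dIJph: "((\<lambda>t. Im (J_23 n k0 k1 k2 (r, t, pr, pph))) has_real_derivative ((n-1) * A1 * c + A2ph * c - (n-1) * A2 * s)) (at ph)"
    unfolding ImJ
    apply (rule derivative_eq_intros refl | rule r | (simp add: r r0; fail))+
    using r e unfolding defs apply ((simp only: Ls)?) apply (fold e_def) apply (simp add: field_simps) apply (simp_all add: algebra_simps power2_eq_square power3_eq_cube power4_eq_xxxx eval_nat_numeral)? done
  have dRJpr: "((\<lambda>t. Re (J_23 n k0 k1 k2 (r, ph, t, pph))) has_real_derivative (-A2pr * s)) (at pr)"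
    unfolding ReJ
    apply (rule derivative_eq_intros refl | rule r | (simp add: r r0; fail))+
    using r e unfolding defs apply ((simp only: Ls)?) apply (fold e_def) apply (simp add: field_simps) apply (simp_all add: algebra_simps power2_eq_square power3_eq_cube power4_eq_xxxx eval_nat_numeral)? done
  have dIJpr: "((\<lambda>t. Im (J_23 n k0 k1 k2 (r, ph, t, pph))) has_real_derivative (A2pr * c)) (at pr)"
    unfolding ImJ
    apply (rule derivative_eq_intros refl | rule r | (simp add: r r0; fail))+
    using r e unfolding defs apply ((simp only: Ls)?) apply (fold e_def) apply (simp add: field_simps) apply (simp_all add: algebra_simps power2_eq_square power3_eq_cube power4_eq_xxxx eval_nat_numeral)? done
  have dRJpp: "((\<lambda>t. Re (J_23 n k0 k1 k2 (r, ph, pr, t))) has_real_derivative (A1pp * c - A2pp * s)) (at pph)"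
    unfolding ReJ
    apply (rule derivative_eq_intros refl | rule r | (simp add: r r0; fail))+
    using r e unfolding defs apply ((simp only: Ls)?) apply (fold e_def) apply (simp add: field_simps) apply (simp_all add: algebra_simps power2_eq_square power3_eq_cube power4_eq_xxxx eval_nat_numeral)? done
  have dIJpp: "((\<lambda>t. Im (J_23 n k0 k1 k2 (r, ph, pr, t))) has_real_derivative (A1pp * s + A2pp * c)) (at pph)"
    unfolding ImJ
    apply (rule derivative_eq_intros refl | rule r | (simp add: r r0; fail))+
    using r e unfolding defs apply ((simp only: Ls)?) apply (fold e_def) apply (simp add: field_simps) apply (simp_all add: algebra_simps power2_eq_square power3_eq_cube power4_eq_xxxx eval_nat_numeral)? done
  have P: "pd_r (J_23 n k0 k1 k2) (r,ph,pr,pph) = Complex (A1r * c - A2r * s) (A1r * s + A2r * c)"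
          "pd_phi (J_23 n k0 k1 k2) (r,ph,pr,pph) = Complex (-(n-1) * A1 * s - A2ph * s - (n-1) * A2 * c) ((n-1) * A1 * c + A2ph * c - (n-1) * A2 * s)"
          "pd_pr (J_23 n k0 k1 k2) (r,ph,pr,pph) = Complex (-A2pr * s) (A2pr * c)"
          "pd_pphi (J_23 n k0 k1 k2) (r,ph,pr,pph) = Complex (A1pp * c - A2pp * s) (A1pp * s + A2pp * c)"
    by (simp_all add: pd_r_def pd_phi_def pd_pr_def pd_pphi_def vd_cplx[OF dRJr dIJr] vd_cplx[OF dRJph dIJph]
          vd_cplx[OF dRJpr dIJpr] vd_cplx[OF dRJpp dIJpp])
  have Q: "pd_r (\<lambda>z. complex_of_real (H_nd n k0 k1 k2 z)) (r,ph,pr,pph) = complex_of_real Hr"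
          "pd_phi (\<lambda>z. complex_of_real (H_nd n k0 k1 k2 z)) (r,ph,pr,pph) = complex_of_real Hph"
          "pd_pr (\<lambda>z. complex_of_real (H_nd n k0 k1 k2 z)) (r,ph,pr,pph) = complex_of_real Hpr"
          "pd_pphi (\<lambda>z. complex_of_real (H_nd n k0 k1 k2 z)) (r,ph,pr,pph) = complex_of_real Hpp"
    by (simp_all add: pd_r_def pd_phi_def pd_pr_def pd_pphi_def vd_real[OF dHr] vd_real[OF dHph]
          vd_real[OF dHpr] vd_real[OF dHpp])
  show ?thesis
    unfolding poisson_def P Q
    using r e unfolding defs
    apply (simp add: complex_eq_iff field_simps)
    apply (simp_all add: algebra_simps power2_eq_square power3_eq_cube power4_eq_xxxx eval_nat_numeral)?
    done
qed

end
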